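(* Let $\hat c\in\mathcal C$ satisfy the out-of-sample guarantee with speed $(a_T)$, where $(a_T)$ is any sequence of positive reals with $a_T\to\infty$. Then for all $\mathbb P\in\mathcal P^o$ and $x\in\mathcal X$, $\liminf_{T\to\infty}\big(\hat c(x,\mathbb P,T)-c(x,\mathbb P)\big)\ge0$.
   Context: Setting: $\Sigma=\{1,\dots,d\}$ ($d\ge2$) is finite; $\mathcal P\subset\mathbb R^d$ is the probability simplex over $\Sigma$ and $\mathcal P^o$ its relative interior (all entries positive). $\mathcal X\subset\mathbb R^n$ is compact and $\ell:\mathcal X\times\Sigma\to\mathbb R$ is continuous in $x$ for each $i$. For $x\in\mathcal X$, $\mu\in\mathbb R^d$ let $c(x,\mu)=\sum_{i\in\Sigma}\ell(x,i)\mu(i)$. Data $\xi_1,\xi_2,\dots$ are i.i.d. with law $\mathbb P\in\mathcal P$, $\mathbb P^\infty$ denotes their joint law, and $\hat{\mathbb P}_T(i)=\frac1T\sum_{t=1}^T\mathbf 1\{\xi_t=i\}$. A predictor is a sequence $\hat c=(\hat c(\cdot,\cdot,T))_{T\in\mathbb N}$ of functions $\mathcal X\times\mathcal P\to\mathbb R$. It is regular, written $\hat c\in\mathcal C$, if (i) the sequence $(\hat c(\cdot,\cdot,T))_T$ is uniformly bounded and equicontinuous on $\mathcal X\times\mathcal P$, and (ii) each $\hat c(x,\cdot,T)$ is differentiable in $\mathbb P$ and the sequence of derivative maps $(x,\mathbb P)\mapsto\nabla_{\mathbb P}\hat c(x,\mathbb P,T)$ is uniformly bounded and equicontinuous. (A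 sequence $(f_T)$ is equicontinuous if for every point $y$ and $\varepsilon>0$ there is a neighbourhood $U$ of $y$ with $|f_T(y)-f_T(z)|<\varepsilon$ for all $z\in U$ and all $T$.) Out-of-sample guarantee with speed $(a_T)$: for all $x\in\mathcal X$ and $\mathbb P\in\mathcal P^o$, $\limsup_{T\to\infty}\frac1{a_T}\log\mathbb P^\infty\big(c(x,\mathbb P)>\hat c(x,\hat{\mathbb P}_T,T)\big)\le-1$. *)

theory Defs
  imports "HOL-Probability.Probability"
begin

definition prob_simplex :: "(real^'d) set" where
  "prob_simplex = {p. (\<forall>i. 0 \<le> p $ i) \<and> (\<Sum>i\<in>UNIV. p $ i) = 1}"

definition prob_simplex_ri :: "(real^'d) set" where
  "prob_simplex_ri = {p. (\<forall>i. 0 < p $ i) \<and> (\<Sum>i\<in>UNIV. p $ i) = 1}"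

definition cost :: "('x \<Rightarrow> 'd::finite \<Rightarrow> real) \<Rightarrow> 'x \<Rightarrow> real^'d \<Rightarrow> real" where
  "cost l x \<mu> = (\<Sum>i\<in>UNIV. l x i * \<mu> $ i)"

definition law :: "real^'d \<Rightarrow> 'd::finite measure" where
  "law P = point_measure UNIV (\<lambda>i. ennreal (P $ i))"

text \<open>Empirical distribution of xi_1..xi_T, where xi_t = omega !! (t-1).\<close>
definition empirical :: "'d::finite stream \<Rightarrow> nat \<Rightarrow> real^'d" where
  "empirical \<omega> T = (\<chi> i. real (card {t. t < T \<and> \<omega> !! t = i}) / real T)"

definition regular_predictor ::
  "'x::metric_space set \<Rightarrow> ('x \<Rightarrow> real^'d \<Rightarrow> nat \<Rightarrow> real) \<Rightarrow> bool" where
  "regular_predictor X ch \<longleftrightarrow>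
     (\<exists>B. \<forall>T\<ge>1. \<forall>x\<in>X. \<forall>p\<in>prob_simplex. \<bar>ch x p T\<bar> \<le> B) \<and>
     (\<forall>x\<in>X. \<forall>p\<in>prob_simplex. \<forall>\<epsilon>>0. \<exists>\<delta>>0. \<forall>x'\<in>X. \<forall>p'\<in>prob_simplex.
        dist (x', p') (x, p) < \<delta> \<longrightarrow> (\<forall>T\<ge>1. \<bar>ch x p T - ch x' p' T\<bar> < \<epsilon>)) \<and>
     (\<exists>D :: 'x \<Rightarrow> real^'d \<Rightarrow> nat \<Rightarrow> real^'d.
        (\<forall>T\<ge>1. \<forall>x\<in>X. \<forall>p\<in>prob_simplex.
           ((\<lambda>q. ch x q T) has_derivative (\<lambda>h. D x p T \<bullet> h)) (at p within prob_simplex)) \<and>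
        (\<exists>B. \<forall>T\<ge>1. \<forall>x\<in>X. \<forall>p\<in>prob_simplex. norm (D x p T) \<le> B) \<and>
        (\<forall>x\<in>X. \<forall>p\<in>prob_simplex. \<forall>\<epsilon>>0. \<exists>\<delta>>0. \<forall>x'\<in>X. \<forall>p'\<in>prob_simplex.
           dist (x', p') (x, p) < \<delta> \<longrightarrow> (\<forall>T\<ge>1. dist (D x p T) (D x' p' T) < \<epsilon>)))"

definition disappointment_prob ::
  "('x \<Rightarrow> 'd::finite \<Rightarrow> real) \<Rightarrow> ('x \<Rightarrow> real^'d \<Rightarrow> nat \<Rightarrow> real) \<Rightarrow> 'x \<Rightarrow> real^'d \<Rightarrow> nat \<Rightarrow> real" where
  "disappointment_prob l ch x P T =
     measure (stream_space (law P))
       {\<omega> \<in> space (stream_space (law P)). cost l x P > ch x (empirical \<omega> T) T}"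

definition scaled_log :: "real \<Rightarrow> real \<Rightarrow> ereal" where
  "scaled_log a q = (if q = 0 then -\<infinity> else ereal (ln q / a))"

definition out_of_sample_guarantee ::
  "'x set \<Rightarrow> ('x \<Rightarrow> 'd::finite \<Rightarrow> real) \<Rightarrow> ('x \<Rightarrow> real^'d \<Rightarrow> nat \<Rightarrow> real) \<Rightarrow> (nat \<Rightarrow> real) \<Rightarrow> bool" where
  "out_of_sample_guarantee X l ch a \<longleftrightarrow>
     (\<forall>x\<in>X. \<forall>P\<in>prob_simplex_ri.
        limsup (\<lambda>T. scaled_log (a T) (disappointment_prob l ch x P T)) \<le> -1)"

end

theory Submission
  imports Defs "HOL-Real_Asymp.Real_Asymp"
begin

lemma law_prob:
  assumes "P \<in> prob_simplex"
  shows "prob_space (law P)"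
proof
  have "emeasure (law P) (space (law P)) = (\<Sum>i\<in>UNIV. ennreal (P $ i))"
    unfolding law_def by (simp add: emeasure_point_measure_finite space_point_measure)
  also have "\<dots> = ennreal (\<Sum>i\<in>UNIV. P $ i)"
    using assms by (intro sum_ennreal) (auto simp: prob_simplex_def)
  also have "\<dots> = 1" using assms by (simp add: prob_simplex_def)
  finally show "emeasure (law P) (space (law P)) = 1" .
qed

lemma law_sets[simp]: "sets (law P) = UNIV" "space (law P) = UNIV"
  by (auto simp: law_def sets_point_measure space_point_measure)

lemma law_single:
  assumes "P \<in> prob_simplex"
  shows "measure (law P) {i} = P $ i"
  using assms unfolding law_def
  by (simp add: measure_def emeasure_point_measure_finite prob_simplex_def)

lemma indep_coords:
  assumes "P \<in> prob_simplex" "T \<ge> 1"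
  shows "prob_space.indep_vars (PiM UNIV (\<lambda>_::nat. law P)) (\<lambda>_. law P) (\<lambda>t \<omega>. \<omega> t) {..<T}"
proof -
  interpret PS: product_prob_space "\<lambda>_::nat. law P" UNIV
    using law_prob[OF assms(1)]
    by (simp add: product_prob_space_def product_prob_space_axioms_def product_sigma_finite_def prob_space_imp_sigma_finite)
  have "0 \<in> {..<T}" using assms by auto
  then have ne: "{..<T} \<noteq> {}" by blast
  have "distr (PiM UNIV (\<lambda>_::nat. law P)) (PiM {..<T} (\<lambda>_. law P)) (\<lambda>x. \<lambda>t\<in>{..<T}. x t)
     = PiM {..<T} (\<lambda>_. law P)"
    using PS.distr_PiM_restrict_finite[of "{..<T}"] by (simp add: restrict_def)
  also have "\<dots> = PiM {..<T} (\<lambda>t. distr (PiM UNIV (\<lambda>_::nat. law P)) (law P) (\<lambda>\<omega>. \<omega> t))"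
    by (intro PiM_cong refl) (simp add: PS.PiM_component)
  finally show ?thesis
    by (subst PS.indep_vars_iff_distr_eq_PiM'[OF ne]) auto
qed

lemma coord_hoeffding:
  assumes "P \<in> prob_simplex" "T \<ge> 1" "\<eta> \<ge> 0"
  shows "measure (PiM UNIV (\<lambda>_::nat. law P))
     {\<omega>\<in>space (PiM UNIV (\<lambda>_::nat. law P)). \<bar>(\<Sum>t\<in>{..<T}. indicator {i} (\<omega> t)) / real (card {..<T}) - P $ i\<bar> \<ge> \<eta>}
     \<le> 2 * exp (-2 * real T * \<eta>\<^sup>2)"
proof -
  interpret PS: product_prob_space "\<lambda>_::nat. law P" UNIV
    using law_prob[OF assms(1)]
    by (simp add: product_prob_space_def product_prob_space_axioms_def product_sigma_finite_def prob_space_imp_sigma_finite)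
  have ind: "prob_space.indep_vars (PiM UNIV (\<lambda>_::nat. law P)) (\<lambda>_. borel) (\<lambda>t \<omega>. indicator {i} (\<omega> t) :: real) {..<T}"
    using PS.indep_vars_compose2[OF indep_coords[OF assms(1,2)], of "\<lambda>_ x. indicator {i} x :: real" "\<lambda>_. borel"]
    by (simp add: measurable_def)
  have m0: "(\<lambda>\<omega>. \<omega> t) \<in> measurable (PiM UNIV (\<lambda>_::nat. law P)) (law P)" for t
    by (rule measurable_component_singleton) simp
  have mi: "(indicator {i} :: _ \<Rightarrow> real) \<in> measurable (law P) borel"
    by (simp add: measurable_def)
  have dd: "distr (PiM UNIV (\<lambda>_::nat. law P)) borel (\<lambda>\<omega>. indicator {i} (\<omega> t) :: real)
      = distr (law P) borel (indicator {i})" for t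
    using distr_distr[OF mi m0[of t]] PS.PiM_component[of t] by (simp add: comp_def)
  have rv: "(\<lambda>\<omega>. indicator {i} (\<omega> 0) :: real) \<in> borel_measurable (PiM UNIV (\<lambda>_::nat. law P))"
    using measurable_compose[OF m0 mi] .
  have mu: "PS.P.expectation (\<lambda>\<omega>. indicator {i} (\<omega> 0) :: real) = P $ i"
  proof -
    have "PS.P.expectation (\<lambda>\<omega>. indicator {i} (\<omega> 0) :: real)
       = integral\<^sup>L (distr (PiM UNIV (\<lambda>_::nat. law P)) (law P) (\<lambda>\<omega>. \<omega> 0)) (indicator {i})"
      by (rule integral_distr[OF m0 mi, symmetric])
    also have "\<dots> = integral\<^sup>L (law P) (indicator {i})"
      using PS.PiM_component[of 0] by simp
    also have "\<dots> = measure (law P) {i}"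
      using law_prob[OF assms(1)] by (simp add: prob_space.emeasure_le_1 prob_space_def finite_measure.emeasure_finite)
    also have "\<dots> = P $ i" by (rule law_single[OF assms(1)])
    finally show ?thesis .
  qed
  interpret H: Hoeffding_ineq_iid "PiM UNIV (\<lambda>_::nat. law P)" "{..<T}" "\<lambda>t \<omega>. indicator {i} (\<omega> t)"
     "\<lambda>\<omega>. indicator {i} (\<omega> 0)" 0 1 "PS.P.expectation (\<lambda>\<omega>. indicator {i} (\<omega> 0) :: real)"
  proof unfold_locales
    show "prob_space.indep_vars (PiM UNIV (\<lambda>_::nat. law P)) (\<lambda>_. borel) (\<lambda>t \<omega>. indicator {i} (\<omega> t) :: real) {..<T}" by (rule ind)
  qed (auto simp: dd rv)
  have "0 \<in> {..<T}" using assms by auto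
  then have ne: "{..<T} \<noteq> {}" by blast
  show ?thesis
    using ne H.Hoeffding_ineq_abs_ge'[OF assms(3)] assms(2) by (simp add: mu H.\<mu>_def)
qed

lemma card_sum_ind:
  "real (card {t::nat. t < T \<and> f t = i}) = (\<Sum>t\<in>{..<T}. indicator {i} (f t) :: real)"
proof -
  have "{t. t < T \<and> f t = i} = {..<T} \<inter> {t. f t = i}" by auto
  then have "real (card {t. t < T \<and> f t = i}) = (\<Sum>t\<in>{..<T}. indicator {t. f t = i} t :: real)"
    using sum.inter_restrict[of "{..<T::nat}" "\<lambda>_. 1::real" "{t. f t = i}"] by (simp add: indicator_def of_bool_def)
  also have "\<dots> = (\<Sum>t\<in>{..<T}. indicator {i} (f t) :: real)"
    by (intro sum.cong) (auto simp: indicator_def)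
  finally show ?thesis .
qed

lemma emp_coord: "empirical \<omega> T $ i = (\<Sum>t\<in>{..<T}. indicator {i} (\<omega> !! t) :: real) / real T"
  by (simp add: empirical_def card_sum_ind)

lemma count_meas[measurable]:
  "(\<lambda>\<omega>. (\<Sum>t\<in>{..<T}. indicator {i} (\<omega> !! t) :: real)) \<in> borel_measurable (stream_space (law P))"
proof -
  have "(\<lambda>\<omega>. indicator {i} (\<omega> !! t) :: real) \<in> borel_measurable (stream_space (law P))" for t
    using measurable_compose[OF measurable_snth[of t "law P"], of "indicator {i}" borel]
    by (simp add: measurable_def)
  then show ?thesis by (intro borel_measurable_sum) auto
qed

lemma stream_coord:
  assumes "P \<in> prob_simplex" "T \<ge> 1" "\<eta> \<ge> 0"
  shows "measure (stream_space (law P))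
     {\<omega>\<in>space (stream_space (law P)). \<bar>empirical \<omega> T $ i - P $ i\<bar> \<ge> \<eta>}
     \<le> 2 * exp (-2 * real T * \<eta>\<^sup>2)"
proof -
  let ?M = "PiM UNIV (\<lambda>_::nat. law P)"
  let ?S = "stream_space (law P)"
  let ?A = "{\<omega>\<in>space ?S. \<bar>empirical \<omega> T $ i - P $ i\<bar> \<ge> \<eta>}"
  have A: "?A \<in> sets ?S"
    unfolding emp_coord by measurable
  have "measure ?S ?A = measure (distr ?M ?S to_stream) ?A"
    using stream_space_eq_distr[of "law P"] by simp
  also have "\<dots> = measure ?M (to_stream -` ?A \<inter> space ?M)"
    by (rule measure_distr) (use A in auto)
  also have "to_stream -` ?A \<inter> space ?M = {\<omega>\<in>space ?M. \<bar>(\<Sum>t\<in>{..<T}. indicator {i} (\<omega> t)) / real (card {..<T}) - P $ i\<bar> \<ge> \<eta>}"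
    using measurable_space[OF measurable_to_stream[of "law P"]]
    by (auto simp: emp_coord to_stream_def)
  also have "measure ?M \<dots> \<le> 2 * exp (-2 * real T * \<eta>\<^sup>2)"
    by (rule coord_hoeffding[OF assms])
  finally show ?thesis .
qed

lemma dis_meas:
  fixes g :: "real^'d::finite \<Rightarrow> real"
  shows "{\<omega> \<in> space (stream_space (law P)). c > g (empirical \<omega> T)} \<in> sets (stream_space (law P))"
proof -
  let ?S = "stream_space (law P)"
  define K where "K = {k :: 'd \<Rightarrow> nat. \<forall>i. k i \<in> {..T}}"
  have finK: "finite K"
  proof -
    have "K = PiE UNIV (\<lambda>_. {..T})" unfolding K_def by (auto simp: PiE_UNIV_domain)
    then show ?thesis by (simp add: finite_PiE)
  qed
  define F where "F = (\<lambda>(i::'d) (\<omega>::'d stream). (\<Sum>t\<in>{..<T}. indicator {i} (\<omega> !! t) :: real))"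
  have eq: "{\<omega> \<in> space ?S. c > g (empirical \<omega> T)} =
     {\<omega> \<in> space ?S. \<exists>k\<in>K. (\<forall>i. F i \<omega> = real (k i)) \<and> c > g (\<chi> i. real (k i) / real T)}"
  proof (intro Collect_cong conj_cong refl iffI)
    fix \<omega> assume "c > g (empirical \<omega> T)"
    define k where "k = (\<lambda>i. card {t. t < T \<and> \<omega> !! t = i})"
    have "k \<in> K" unfolding K_def k_def
    proof (intro CollectI allI)
      fix i
      have "card {t. t < T \<and> \<omega> !! t = i} \<le> card {..<T}" by (intro card_mono) auto
      then show "card {t. t < T \<and> \<omega> !! t = i} \<in> {..T}" by simp
    qed
    moreover have "\<forall>i. F i \<omega> = real (k i)" unfolding F_def k_def
      by (simp add: card_sum_ind)
    moreover have "empirical \<omega> T = (\<chi> i. real (k i) / real T)"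
      unfolding empirical_def k_def ..
    ultimately show "\<exists>k\<in>K. (\<forall>i. F i \<omega> = real (k i)) \<and> c > g (\<chi> i. real (k i) / real T)"
      using \<open>c > g (empirical \<omega> T)\<close> by auto
  next
    fix \<omega> assume "\<exists>k\<in>K. (\<forall>i. F i \<omega> = real (k i)) \<and> c > g (\<chi> i. real (k i) / real T)"
    then obtain k where k: "\<forall>i. F i \<omega> = real (k i)" "c > g (\<chi> i. real (k i) / real T)" by blast
    have "empirical \<omega> T = (\<chi> i. real (k i) / real T)"
      unfolding empirical_def using k(1) by (simp add: F_def card_sum_ind[symmetric])
    then show "c > g (empirical \<omega> T)" using k(2) by simp
  qed
  have Fm[measurable]: "F i \<in> borel_measurable ?S" for i
    unfolding F_def by (rule count_meas)
  show ?thesis unfolding eq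
    by (intro sets.sets_Collect_finite_Ex finK) measurable
qed

lemma conc:
  assumes "P \<in> prob_simplex" "\<eta> > 0"
  shows "eventually (\<lambda>T. measure (stream_space (law P))
      {\<omega>\<in>space (stream_space (law P)). \<forall>i. \<bar>empirical \<omega> T $ i - P $ i\<bar> < \<eta>} \<ge> 1/2) sequentially"
proof -
  let ?S = "stream_space (law P)"
  interpret S: prob_space ?S
    using law_prob[OF assms(1)] by (rule prob_space.prob_space_stream_space)
  define d where "d = real CARD('a)"
  have "(\<lambda>T::nat. d * (2 * exp (-2 * real T * \<eta>\<^sup>2))) \<longlonglongrightarrow> 0"
    using assms(2) by real_asymp
  then have ev: "eventually (\<lambda>T. d * (2 * exp (-2 * real T * \<eta>\<^sup>2)) < 1/2) sequentially"
    by (rule order_tendstoD) simp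
  show ?thesis
    using ev eventually_ge_at_top[of 1]
  proof eventually_elim
    case (elim T)
    define A where "A = (\<lambda>i. {\<omega>\<in>space ?S. \<bar>empirical \<omega> T $ i - P $ i\<bar> \<ge> \<eta>})"
    have Am: "A i \<in> sets ?S" for i unfolding A_def emp_coord by measurable
    let ?G = "{\<omega>\<in>space ?S. \<forall>i. \<bar>empirical \<omega> T $ i - P $ i\<bar> < \<eta>}"
    have G: "?G = space ?S - (\<Union>i. A i)" unfolding A_def by (auto simp: not_le) (meson not_le)
    have "S.prob (\<Union>i. A i) \<le> (\<Sum>i\<in>UNIV. S.prob (A i))"
      by (rule S.finite_measure_subadditive_finite) (auto simp: Am)
    also have "\<dots> \<le> (\<Sum>i\<in>(UNIV::'a set). 2 * exp (-2 * real T * \<eta>\<^sup>2))"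
      unfolding A_def using stream_coord[OF assms(1) \<open>T \<ge> 1\<close>] assms(2)
      by (intro sum_mono) auto
    also have "\<dots> = d * (2 * exp (-2 * real T * \<eta>\<^sup>2))" by (simp add: d_def)
    finally have "S.prob (\<Union>i. A i) < 1/2" using elim by linarith
    moreover have "S.prob ?G = 1 - S.prob (\<Union>i. A i)"
      unfolding G by (rule S.prob_compl) (auto simp: Am)
    ultimately show ?case by linarith
  qed
qed

lemma emp_simplex:
  assumes "T \<ge> 1"
  shows "empirical \<omega> T \<in> prob_simplex"
proof -
  have "(\<Sum>i\<in>UNIV. empirical \<omega> T $ i) = (\<Sum>i\<in>UNIV. \<Sum>t\<in>{..<T}. indicator {i} (\<omega> !! t) :: real) / real T"
    by (simp add: emp_coord sum_divide_distrib)
  also have "(\<Sum>i\<in>UNIV. \<Sum>t\<in>{..<T}. indicator {i} (\<omega> !! t) :: real) = (\<Sum>t\<in>{..<T}. \<Sum>i\<in>UNIV. indicator {i} (\<omega> !! t))"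
    by (rule sum.swap)
  also have "\<dots> = (\<Sum>t\<in>{..<T}. 1)"
    by (intro sum.cong refl) (simp add: indicator_def sum.delta)
  finally have "(\<Sum>i\<in>UNIV. empirical \<omega> T $ i) = 1" using assms by simp
  then show ?thesis unfolding prob_simplex_def by (auto simp: empirical_def)
qed

theorem mainTheorem10:
  fixes X :: "'x::euclidean_space set"
    and l :: "'x \<Rightarrow> 'd::finite \<Rightarrow> real"
    and ch :: "'x \<Rightarrow> real^'d \<Rightarrow> nat \<Rightarrow> real"
    and a :: "nat \<Rightarrow> real"
  assumes "CARD('d) \<ge> 2"
    and "compact X"
    and "\<forall>i. continuous_on X (\<lambda>x. l x i)"
    and "regular_predictor X ch"
    and "\<forall>T. a T > 0"
    and "filterlim a at_top sequentially"
    and "out_of_sample_guarantee X l ch a"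
  shows "\<forall>P\<in>prob_simplex_ri. \<forall>x\<in>X.
           liminf (\<lambda>T. ereal (ch x P T - cost l x P)) \<ge> 0"
proof (intro ballI)
  fix P :: "real^'d" and x assume Pri: "P \<in> prob_simplex_ri" and xX: "x \<in> X"
  have P: "P \<in> prob_simplex" using Pri by (auto simp: prob_simplex_def prob_simplex_ri_def less_imp_le)
  define c0 where "c0 = cost l x P"
  let ?S = "stream_space (law P)"
  interpret S: prob_space ?S
    using law_prob[OF P] by (rule prob_space.prob_space_stream_space)
  have lim: "limsup (\<lambda>T. scaled_log (a T) (disappointment_prob l ch x P T)) \<le> -1"
    using assms(7) xX Pri unfolding out_of_sample_guarantee_def by blast
  then have ev1: "eventually (\<lambda>T. scaled_log (a T) (disappointment_prob l ch x P T) < ereal (-1/2)) sequentially"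
  proof -
    have "ereal (-1/2) > -1" by (simp add: one_ereal_def)
    then show ?thesis using lim unfolding Limsup_le_iff by blast
  qed
  have "((\<lambda>T. ln (1/2) / a T) \<longlongrightarrow> 0) sequentially"
    by (rule tendsto_divide_0[OF tendsto_const filterlim_at_top_imp_at_infinity[OF assms(6)]])
  then have ev2: "eventually (\<lambda>T. ln (1/2) / a T > -1/2) sequentially"
    by (rule order_tendstoD) simp
  show "liminf (\<lambda>T. ereal (ch x P T - c0)) \<ge> 0"
  proof (rule ccontr)
    assume "\<not> ?thesis"
    then obtain y where y: "y < 0" "\<not> eventually (\<lambda>T. y < ereal (ch x P T - c0)) sequentially"
      unfolding le_Liminf_iff by auto
    obtain r where r: "y = ereal r"
      using y by (cases y) auto
    have r0: "r < 0" using y r by simp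
    define \<epsilon> where "\<epsilon> = - r"
    have eps: "\<epsilon> > 0" using r0 by (simp add: \<epsilon>_def)
    obtain \<delta> where del: "\<delta> > 0" and delP: "\<forall>x'\<in>X. \<forall>p'\<in>prob_simplex.
        dist (x', p') (x, P) < \<delta> \<longrightarrow> (\<forall>T\<ge>1. \<bar>ch x P T - ch x' p' T\<bar> < \<epsilon>/2)"
      using assms(4) xX P eps unfolding regular_predictor_def
      by (metis half_gt_zero)
    define d where "d = real CARD('d)"
    have d0: "d > 0" by (simp add: d_def)
    define \<eta> where "\<eta> = \<delta> / d"
    have eta: "\<eta> > 0" using del d0 by (simp add: \<eta>_def)
    note ev3 = conc[OF P eta]
    have "eventually (\<lambda>T. y < ereal (ch x P T - c0)) sequentially"
      using ev1 ev2 ev3 eventually_ge_at_top[of 1]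
    proof eventually_elim
      case (elim T)
      let ?G = "{\<omega>\<in>space ?S. \<forall>i. \<bar>empirical \<omega> T $ i - P $ i\<bar> < \<eta>}"
      let ?D = "{\<omega> \<in> space ?S. c0 > ch x (empirical \<omega> T) T}"
      show ?case
      proof (rule ccontr)
        assume "\<not> y < ereal (ch x P T - c0)"
        then have hT: "ch x P T - c0 \<le> r" using r by simp
        have sub: "?G \<subseteq> ?D"
        proof
          fix \<omega> assume w: "\<omega> \<in> ?G"
          have es: "empirical \<omega> T \<in> prob_simplex" using emp_simplex elim by simp
          have "dist (x, empirical \<omega> T) (x, P) = dist (empirical \<omega> T) P"
            by (simp add: dist_Pair_Pair)
          also have "\<dots> \<le> (\<Sum>i\<in>UNIV. \<bar>(empirical \<omega> T - P) $ i\<bar>)"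
            unfolding dist_norm by (rule norm_le_l1_cart)
          also have "\<dots> < (\<Sum>i\<in>(UNIV::'d set). \<eta>)"
            using w by (intro sum_strict_mono) auto
          also have "\<dots> = \<delta>" using d0 by (simp add: \<eta>_def d_def)
          finally have "\<bar>ch x P T - ch x (empirical \<omega> T) T\<bar> < \<epsilon>/2"
            using delP xX es elim by blast
          then have "ch x (empirical \<omega> T) T < c0" using hT by (simp add: \<epsilon>_def)
          then show "\<omega> \<in> ?D" using w by auto
        qed
        have "1/2 \<le> S.prob ?G" using elim by simp
        also have "\<dots> \<le> S.prob ?D"
          by (rule S.finite_measure_mono[OF sub dis_meas])
        also have "\<dots> = disappointment_prob l ch x P T"
          by (simp add: disappointment_prob_def c0_def)
        finally have q: "1/2 \<le> disappointment_prob l ch x P T" .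
        have aT: "a T > 0" using assms(5) by blast
        have "ln (1/2) \<le> ln (disappointment_prob l ch x P T)"
          using q by (subst ln_le_cancel_iff) auto
        then have "ln (1/2) / a T \<le> ln (disappointment_prob l ch x P T) / a T"
          using aT by (simp add: divide_right_mono)
        then have "scaled_log (a T) (disappointment_prob l ch x P T) > ereal (-1/2)"
          using q elim unfolding scaled_log_def by auto
        then show False using elim by simp
      qed
    qed
    then show False using y by simp
  qed
qed

end
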